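(* Let $\Lambda$ be a finite non-uniform rectangular grid. Then there exists a plane geometric graph on the set of vertices of $\Lambda$ whose maximum vertex degree is at most $3$ and whose stretch factor is at most $3\sqrt{2}$.
   Context: A finite non-uniform $m\times k$ rectangular grid $\Lambda$ has as vertices the $mk$ intersection points of $m$ horizontal lines and $k$ vertical lines, where the spacings between consecutive horizontal lines and between consecutive vertical lines are arbitrary. A geometric graph has straight-segment edges weighted by Euclidean length; its stretch factor is the smallest $t$ such that the shortest-path distance between any two vertices $u,v$ is at most $t|uv|$. A graph is plane if no two edges cross. *)

theory Defs
  imports "HOL-Analysis.Analysis"
begin

type_synonym point = "real \<times> real"

text \<open>Vertex set of the non-uniform grid given by the x-coordinates X of the
vertical lines and the y-coordinates Y of the horizontal lines.
The metric on real \<times> real is the Euclidean one.\<close>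
definition grid_vertices :: "real set \<Rightarrow> real set \<Rightarrow> point set" where
  "grid_vertices X Y = X \<times> Y"

definition geometric_graph :: "point set \<Rightarrow> point set set \<Rightarrow> bool" where
  "geometric_graph V E \<longleftrightarrow> (\<forall>e\<in>E. \<exists>u v. u \<in> V \<and> v \<in> V \<and> u \<noteq> v \<and> e = {u, v})"

definition edge_segment :: "point set \<Rightarrow> point set" where
  "edge_segment e = (\<Union>u\<in>e. \<Union>v\<in>e. closed_segment u v)"

definition plane :: "point set set \<Rightarrow> bool" where
  "plane E \<longleftrightarrow> (\<forall>e1\<in>E. \<forall>e2\<in>E. e1 \<noteq> e2 \<longrightarrow> edge_segment e1 \<inter> edge_segment e2 \<subseteq> e1 \<inter> e2)"

definition degree :: "point set set \<Rightarrow> point \<Rightarrow> nat" where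
  "degree E v = card {e\<in>E. v \<in> e}"

definition max_degree_le :: "point set \<Rightarrow> point set set \<Rightarrow> nat \<Rightarrow> bool" where
  "max_degree_le V E d \<longleftrightarrow> (\<forall>v\<in>V. degree E v \<le> d)"

definition is_path :: "point set set \<Rightarrow> point list \<Rightarrow> point \<Rightarrow> point \<Rightarrow> bool" where
  "is_path E p u v \<longleftrightarrow> p \<noteq> [] \<and> hd p = u \<and> last p = v \<and>
     (\<forall>i. Suc i < length p \<longrightarrow> {p ! i, p ! Suc i} \<in> E)"

definition path_length :: "point list \<Rightarrow> real" where
  "path_length p = (\<Sum>i<length p - 1. dist (p ! i) (p ! Suc i))"

text \<open>Shortest-path distance in the edge-weighted graph (infinite if disconnected).\<close>
definition graph_dist :: "point set set \<Rightarrow> point \<Rightarrow> point \<Rightarrow> ereal" where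
  "graph_dist E u v = (INF p \<in> {p. is_path E p u v}. ereal (path_length p))"

definition stretch_le :: "point set \<Rightarrow> point set set \<Rightarrow> real \<Rightarrow> bool" where
  "stretch_le V E t \<longleftrightarrow> (\<forall>u\<in>V. \<forall>v\<in>V. graph_dist E u v \<le> ereal (t * dist u v))"

end

theory Submission
  imports Defs
begin


lemma greedy_matching:
  fixes M :: "'e set" and meets :: "'e \<Rightarrow> 'e \<Rightarrow> bool" and w :: "'e \<Rightarrow> real"
  assumes "finite M" and refl: "\<And>e. meets e e" and sym: "\<And>e f. meets e f \<Longrightarrow> meets f e"
  shows "\<exists>K\<subseteq>M. (\<forall>e\<in>K. \<forall>f\<in>K. e \<noteq> f \<longrightarrow> \<not> meets e f) \<and> (\<forall>e\<in>M - K. \<exists>f\<in>K. meets e f \<and> w f \<le> w e)"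
  using assms(1)
proof (induction "card M" arbitrary: M rule: less_induct)
  case less
  show ?case
  proof (cases "M = {}")
    case True then show ?thesis by auto
  next
    case False
    have "Min (w ` M) \<in> w ` M" using less.prems False by simp
    then obtain e0 where e0: "e0 \<in> M" "w e0 = Min (w ` M)" by auto
    have e0min: "\<forall>e\<in>M. w e0 \<le> w e" using e0(2) less.prems by simp
    define M' where "M' = {e\<in>M. \<not> meets e e0}"
    have "M' \<subset> M" using e0 refl unfolding M'_def by auto
    hence "card M' < card M" using less.prems by (simp add: psubset_card_mono)
    moreover have "finite M'" using less.prems unfolding M'_def by auto
    ultimately have "\<exists>K'\<subseteq>M'. (\<forall>e\<in>K'. \<forall>f\<in>K'. e \<noteq> f \<longrightarrow> \<not> meets e f) \<and> (\<forall>e\<in>M' - K'. \<exists>f\<in>K'. meets e f \<and> w f \<le> w e)"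
      by (rule less.hyps)
    then obtain K' where K': "K' \<subseteq> M'" "\<forall>e\<in>K'. \<forall>f\<in>K'. e \<noteq> f \<longrightarrow> \<not> meets e f"
        "\<forall>e\<in>M' - K'. \<exists>f\<in>K'. meets e f \<and> w f \<le> w e"
      by (elim exE conjE)
    show ?thesis
    proof (intro exI[of _ "insert e0 K'"] conjI)
      show "insert e0 K' \<subseteq> M" using K'(1) e0(1) unfolding M'_def by auto
      show "\<forall>e\<in>insert e0 K'. \<forall>f\<in>insert e0 K'. e \<noteq> f \<longrightarrow> \<not> meets e f"
        using K'(1,2) sym unfolding M'_def by blast
      show "\<forall>e\<in>M - insert e0 K'. \<exists>f\<in>insert e0 K'. meets e f \<and> w f \<le> w e"
      proof
        fix e assume e: "e \<in> M - insert e0 K'"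
        show "\<exists>f\<in>insert e0 K'. meets e f \<and> w f \<le> w e"
        proof (cases "meets e e0")
          case True then show ?thesis using e e0min by auto
        next
          case False
          hence "e \<in> M' - K'" using e unfolding M'_def by auto
          then show ?thesis using K'(3) by blast
        qed
      qed
    qed
  qed
qed

inductive conn :: "point set set \<Rightarrow> point \<Rightarrow> point \<Rightarrow> real \<Rightarrow> bool" for E where
  refl: "conn E u u 0"
| step: "{u, v} \<in> E \<Longrightarrow> conn E v w c \<Longrightarrow> conn E u w (dist u v + c)"

lemma conn_trans: "conn E p q a \<Longrightarrow> conn E q r b \<Longrightarrow> conn E p r (a + b)"
proof (induction rule: conn.induct)
  case (refl u) then show ?case by simp
next
  case (step u v w c)
  then have "conn E v r (c + b)" by simp
  from conn.step[OF step(1) this] show ?case by (simp add: add.assoc)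
qed

lemma conn_edge: "{u,v} \<in> E \<Longrightarrow> conn E u v (dist u v)"
proof -
  assume h: "{u,v} \<in> E"
  have "conn E u v (dist u v + 0)" by (rule conn.step[OF h conn.refl])
  thus ?thesis by simp
qed

lemma conn_sym: "conn E u v c \<Longrightarrow> conn E v u c"
proof (induction rule: conn.induct)
  case (refl u) then show ?case by (rule conn.refl)
next
  case (step u v w c)
  have "conn E v u (dist v u)" using step(1) conn_edge[of v u E] by (simp add: insert_commute)
  from conn_trans[OF step(3) this] show ?case by (simp add: dist_commute add.commute)
qed

lemma path_length_Cons: "p \<noteq> [] \<Longrightarrow> path_length (u # p) = dist u (hd p) + path_length p"
proof -
  assume p: "p \<noteq> []"
  then obtain n where n: "length p = Suc n" by (cases p) auto
  have "path_length (u # p) = (\<Sum>i<Suc n. dist ((u#p) ! i) ((u#p) ! Suc i))"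
    unfolding path_length_def using n by simp
  also have "\<dots> = dist u (p ! 0) + (\<Sum>i<n. dist (p ! i) (p ! Suc i))"
    by (subst sum.lessThan_Suc_shift) simp
  also have "\<dots> = dist u (hd p) + path_length p"
    unfolding path_length_def using n p by (simp add: hd_conv_nth)
  finally show ?thesis .
qed

lemma conn_path: "conn E u v c \<Longrightarrow> \<exists>p. is_path E p u v \<and> path_length p = c"
proof (induction rule: conn.induct)
  case (refl u)
  show ?case by (rule exI[of _ "[u]"]) (simp add: is_path_def path_length_def)
next
  case (step u v w c)
  then obtain p where p: "is_path E p v w" "path_length p = c" by blast
  have pne: "p \<noteq> []" and hp: "hd p = v" using p(1) by (auto simp: is_path_def)
  have "is_path E (u # p) u w"
    unfolding is_path_def
  proof (intro conjI allI impI)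
    show "last (u # p) = w" using p(1) pne by (simp add: is_path_def)
    fix i assume i: "Suc i < length (u # p)"
    show "{(u # p) ! i, (u # p) ! Suc i} \<in> E"
    proof (cases i)
      case 0 then show ?thesis using step(1) hp pne by (simp add: hd_conv_nth)
    next
      case (Suc i') then show ?thesis using p(1) i by (simp add: is_path_def)
    qed
  qed simp_all
  moreover have "path_length (u # p) = dist u v + c" using path_length_Cons[OF pne] hp p(2) by simp
  ultimately show ?case by blast
qed

lemma conn_gd: "conn E u v c \<Longrightarrow> graph_dist E u v \<le> ereal c"
proof -
  assume "conn E u v c"
  then obtain p where p: "is_path E p u v" "path_length p = c" using conn_path by blast
  have "graph_dist E u v \<le> ereal (path_length p)"
    unfolding graph_dist_def by (rule INF_lower) (use p in simp)
  then show ?thesis using p by simp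
qed

definition reach :: "point set set \<Rightarrow> point \<Rightarrow> point \<Rightarrow> real \<Rightarrow> bool" where
  "reach E u v b \<longleftrightarrow> (\<exists>c. conn E u v c \<and> c \<le> b)"

lemma reach_trans: "reach E u v a \<Longrightarrow> reach E v w b \<Longrightarrow> reach E u w (a + b)"
  unfolding reach_def by (meson add_mono conn_trans)
lemma reach_sym: "reach E u v a \<Longrightarrow> reach E v u a"
  unfolding reach_def using conn_sym by blast
lemma reach_mono: "reach E u v a \<Longrightarrow> a \<le> b \<Longrightarrow> reach E u v b"
  unfolding reach_def by force
lemma reach_edge: "{u,v} \<in> E \<Longrightarrow> reach E u v (dist u v)"
  unfolding reach_def using conn_edge by blast
lemma reach_gd: "reach E u v b \<Longrightarrow> graph_dist E u v \<le> ereal b"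
  unfolding reach_def using conn_gd by (meson ereal_less_eq(3) order_trans)



type_synonym edge = "nat \<times> nat \<times> bool"

fun src :: "edge \<Rightarrow> nat \<times> nat" where "src (i,j,d) = (i,j)"
fun tgt :: "edge \<Rightarrow> nat \<times> nat" where "tgt (i,j,d) = (if d then (Suc i, j) else (i, Suc j))"
definition ends :: "edge \<Rightarrow> (nat \<times> nat) set" where "ends t = {src t, tgt t}"
definition meets :: "edge \<Rightarrow> edge \<Rightarrow> bool" where "meets t f \<longleftrightarrow> ends t \<inter> ends f \<noteq> {}"
definition inr :: "nat \<Rightarrow> nat \<Rightarrow> nat \<times> nat \<Rightarrow> bool" where "inr k m = (\<lambda>(i,j). i < k \<and> j < m)"
definition GE :: "nat \<Rightarrow> nat \<Rightarrow> edge set" where "GE k m = {t. inr k m (src t) \<and> inr k m (tgt t)}"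
definition Mset :: "nat \<Rightarrow> nat \<Rightarrow> edge set" where
  "Mset k m = {t \<in> GE k m. odd (fst (src t) + snd (src t))}"
definition Pt :: "(nat \<Rightarrow> real) \<Rightarrow> (nat \<Rightarrow> real) \<Rightarrow> nat \<times> nat \<Rightarrow> point" where
  "Pt x y = (\<lambda>(i,j). (x i, y j))"
definition wt :: "(nat \<Rightarrow> real) \<Rightarrow> (nat \<Rightarrow> real) \<Rightarrow> edge \<Rightarrow> real" where
  "wt x y t = dist (Pt x y (src t)) (Pt x y (tgt t))"
definition seg :: "(nat \<Rightarrow> real) \<Rightarrow> (nat \<Rightarrow> real) \<Rightarrow> edge \<Rightarrow> point set" where
  "seg x y t = {Pt x y (src t), Pt x y (tgt t)}"

lemma finite_GE: "finite (GE k m)"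
proof (rule finite_subset)
  show "GE k m \<subseteq> {..<k} \<times> {..<m} \<times> UNIV"
  proof
    fix t assume t: "t \<in> GE k m"
    obtain i j d where "t = (i,j,d)" by (cases t)
    with t show "t \<in> {..<k} \<times> {..<m} \<times> UNIV" by (simp add: GE_def inr_def)
  qed
qed simp

lemma meets_refl: "meets t t" by (auto simp: meets_def ends_def)
lemma meets_sym: "meets t f \<Longrightarrow> meets f t" by (auto simp: meets_def)

lemma wt_h[simp]: "wt x y (i,j,True) = \<bar>x i - x (Suc i)\<bar>"
  by (simp add: wt_def Pt_def dist_Pair_Pair dist_real_def)
lemma wt_v[simp]: "wt x y (i,j,False) = \<bar>y j - y (Suc j)\<bar>"
  by (simp add: wt_def Pt_def dist_Pair_Pair dist_real_def)

locale gridK =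
  fixes x y :: "nat \<Rightarrow> real" and k m :: nat and K :: "edge set"
  assumes xmono: "\<And>i j. i < j \<Longrightarrow> j < k \<Longrightarrow> x i < x j"
      and ymono: "\<And>i j. i < j \<Longrightarrow> j < m \<Longrightarrow> y i < y j"
      and K_sub: "K \<subseteq> Mset k m"
      and K_match: "\<And>e f. e \<in> K \<Longrightarrow> f \<in> K \<Longrightarrow> e \<noteq> f \<Longrightarrow> \<not> meets e f"
      and K_dom: "\<And>e. e \<in> Mset k m - K \<Longrightarrow> \<exists>f\<in>K. meets e f \<and> wt x y f \<le> wt x y e"
begin

definition KE where "KE = GE k m - (Mset k m - K)"
definition E where "E = seg x y ` KE"

lemma x_le_imp: "x a \<le> x b \<Longrightarrow> a < k \<Longrightarrow> b < k \<Longrightarrow> a \<le> b"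
  using xmono[of b a] by force
lemma y_le_imp: "y a \<le> y b \<Longrightarrow> a < m \<Longrightarrow> b < m \<Longrightarrow> a \<le> b"
  using ymono[of b a] by force
lemma x_mono_le: "a \<le> b \<Longrightarrow> b < k \<Longrightarrow> x a \<le> x b"
  using xmono[of a b] by (cases "a = b") auto
lemma y_mono_le: "a \<le> b \<Longrightarrow> b < m \<Longrightarrow> y a \<le> y b"
  using ymono[of a b] by (cases "a = b") auto
lemma x_inj: "x a = x b \<Longrightarrow> a < k \<Longrightarrow> b < k \<Longrightarrow> a = b"
  by (metis x_le_imp order_refl le_antisym)
lemma y_inj: "y a = y b \<Longrightarrow> a < m \<Longrightarrow> b < m \<Longrightarrow> a = b"
  by (metis y_le_imp order_refl le_antisym)

lemma Pt_inj: "Pt x y a = Pt x y b \<Longrightarrow> inr k m a \<Longrightarrow> inr k m b \<Longrightarrow> a = b"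
proof -
  assume h: "Pt x y a = Pt x y b" "inr k m a" "inr k m b"
  obtain a1 a2 b1 b2 where ab: "a = (a1,a2)" "b = (b1,b2)" by (cases a, cases b)
  have "x a1 = x b1" "y a2 = y b2" using h(1) ab by (auto simp: Pt_def)
  moreover have "a1 < k" "b1 < k" "a2 < m" "b2 < m" using h(2,3) ab by (auto simp: inr_def)
  ultimately show "a = b" using ab x_inj y_inj by metis
qed

lemma wt_h'[simp]: "Suc i < k \<Longrightarrow> \<bar>x i - x (Suc i)\<bar> = x (Suc i) - x i"
  using xmono[of i "Suc i"] by simp
lemma wt_v'[simp]: "Suc j < m \<Longrightarrow> \<bar>y j - y (Suc j)\<bar> = y (Suc j) - y j"
  using ymono[of j "Suc j"] by simp

lemma KE_GE: "t \<in> KE \<Longrightarrow> t \<in> GE k m" by (simp add: KE_def)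
lemma K_KE: "t \<in> K \<Longrightarrow> t \<in> KE" using K_sub by (auto simp: KE_def Mset_def)
lemma even_KE: "t \<in> GE k m \<Longrightarrow> even (fst (src t) + snd (src t)) \<Longrightarrow> t \<in> KE"
  by (auto simp: KE_def Mset_def)

lemma reach_kept: "t \<in> KE \<Longrightarrow> reach E (Pt x y (src t)) (Pt x y (tgt t)) (wt x y t)"
  unfolding wt_def by (rule reach_edge) (auto simp: E_def seg_def)

lemma GE_h: "(i,j,True) \<in> GE k m \<longleftrightarrow> Suc i < k \<and> j < m" by (auto simp: GE_def inr_def)
lemma GE_v: "(i,j,False) \<in> GE k m \<longleftrightarrow> i < k \<and> Suc j < m" by (auto simp: GE_def inr_def)

lemma reach_kept_h: "(i,j,True) \<in> KE \<Longrightarrow> reach E (Pt x y (i,j)) (Pt x y (Suc i,j)) \<bar>x i - x (Suc i)\<bar>"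
  using reach_kept[of "(i,j,True)"] by simp
lemma reach_kept_v: "(i,j,False) \<in> KE \<Longrightarrow> reach E (Pt x y (i,j)) (Pt x y (i,Suc j)) \<bar>y j - y (Suc j)\<bar>"
  using reach_kept[of "(i,j,False)"] by simp

end


context gridK begin

abbreviation "dx i \<equiv> \<bar>x i - x (Suc i)\<bar>"
abbreviation "dy j \<equiv> \<bar>y j - y (Suc j)\<bar>"

lemma face_a1:
  assumes "Suc i < k" "Suc j < m" "odd (i+j)" "(i,j,False) \<in> KE"
  shows "reach E (Pt x y (i,j)) (Pt x y (Suc i,j)) (dx i + 2 * dy j)"
proof -
  have r1: "reach E (Pt x y (i,j)) (Pt x y (i,Suc j)) (dy j)" using reach_kept_v[OF assms(4)] .
  have "(i,Suc j,True) \<in> KE" by (rule even_KE) (use assms in \<open>auto simp: GE_h\<close>)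
  from reach_kept_h[OF this] have r2: "reach E (Pt x y (i,Suc j)) (Pt x y (Suc i,Suc j)) (dx i)" .
  have "(Suc i,j,False) \<in> KE" by (rule even_KE) (use assms in \<open>auto simp: GE_v\<close>)
  from reach_sym[OF reach_kept_v[OF this]] have r3: "reach E (Pt x y (Suc i,Suc j)) (Pt x y (Suc i,j)) (dy j)" .
  from reach_trans[OF reach_trans[OF r1 r2] r3] show ?thesis by (rule reach_mono) simp
qed

lemma face_a2:
  assumes "Suc i < k" "Suc j < m" "odd (i+j)" "(i,j,True) \<in> KE"
  shows "reach E (Pt x y (i,j)) (Pt x y (i,Suc j)) (dy j + 2 * dx i)"
proof -
  have r1: "reach E (Pt x y (i,j)) (Pt x y (Suc i,j)) (dx i)" using reach_kept_h[OF assms(4)] .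
  have "(Suc i,j,False) \<in> KE" by (rule even_KE) (use assms in \<open>auto simp: GE_v\<close>)
  from reach_kept_v[OF this] have r2: "reach E (Pt x y (Suc i,j)) (Pt x y (Suc i,Suc j)) (dy j)" .
  have "(i,Suc j,True) \<in> KE" by (rule even_KE) (use assms in \<open>auto simp: GE_h\<close>)
  from reach_sym[OF reach_kept_h[OF this]] have r3: "reach E (Pt x y (Suc i,Suc j)) (Pt x y (i,Suc j)) (dx i)" .
  from reach_trans[OF reach_trans[OF r1 r2] r3] show ?thesis by (rule reach_mono) simp
qed

lemma face_b1:
  assumes "Suc i < k" "Suc j < m" "even (i+j)" "(Suc i,j,False) \<in> KE"
  shows "reach E (Pt x y (i,Suc j)) (Pt x y (Suc i,Suc j)) (dx i + 2 * dy j)"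
proof -
  have "(i,j,False) \<in> KE" by (rule even_KE) (use assms in \<open>auto simp: GE_v\<close>)
  from reach_sym[OF reach_kept_v[OF this]] have r1: "reach E (Pt x y (i,Suc j)) (Pt x y (i,j)) (dy j)" .
  have "(i,j,True) \<in> KE" by (rule even_KE) (use assms in \<open>auto simp: GE_h\<close>)
  from reach_kept_h[OF this] have r2: "reach E (Pt x y (i,j)) (Pt x y (Suc i,j)) (dx i)" .
  have r3: "reach E (Pt x y (Suc i,j)) (Pt x y (Suc i,Suc j)) (dy j)" using reach_kept_v[OF assms(4)] .
  from reach_trans[OF reach_trans[OF r1 r2] r3] show ?thesis by (rule reach_mono) simp
qed

lemma face_b2:
  assumes "Suc i < k" "Suc j < m" "even (i+j)" "(i,Suc j,True) \<in> KE"
  shows "reach E (Pt x y (Suc i,j)) (Pt x y (Suc i,Suc j)) (dy j + 2 * dx i)"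
proof -
  have "(i,j,True) \<in> KE" by (rule even_KE) (use assms in \<open>auto simp: GE_h\<close>)
  from reach_sym[OF reach_kept_h[OF this]] have r1: "reach E (Pt x y (Suc i,j)) (Pt x y (i,j)) (dx i)" .
  have "(i,j,False) \<in> KE" by (rule even_KE) (use assms in \<open>auto simp: GE_v\<close>)
  from reach_kept_v[OF this] have r2: "reach E (Pt x y (i,j)) (Pt x y (i,Suc j)) (dy j)" .
  have r3: "reach E (Pt x y (i,Suc j)) (Pt x y (Suc i,Suc j)) (dx i)" using reach_kept_h[OF assms(4)] .
  from reach_trans[OF reach_trans[OF r1 r2] r3] show ?thesis by (rule reach_mono) simp
qed

lemma wt_nonneg: "0 \<le> wt x y t" by (simp add: wt_def)

lemma edge_stretch:
  assumes t: "t \<in> GE k m"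
  shows "reach E (Pt x y (src t)) (Pt x y (tgt t)) (3 * wt x y t)"
proof (cases "t \<in> KE")
  case True
  show ?thesis by (rule reach_mono[OF reach_kept[OF True]]) (use wt_nonneg[of t] in simp)
next
  case False
  hence tM: "t \<in> Mset k m - K" using t by (simp add: KE_def)
  then obtain f where f: "f \<in> K" "meets t f" "wt x y f \<le> wt x y t" using K_dom by blast
  have fKE: "f \<in> KE" using K_KE[OF f(1)] .
  have tf: "t \<noteq> f" using tM f(1) by auto
  have fM: "f \<in> Mset k m" using f(1) K_sub by auto
  obtain i j d where tt: "t = (i,j,d)" by (cases t)
  obtain i' j' d' where ff: "f = (i',j',d')" by (cases f)
  have par: "odd (i+j)" "odd (i'+j')" using tM fM tt ff by (auto simp: Mset_def)
  have inr: "inr k m (src t)" "inr k m (tgt t)" "inr k m (src f)" "inr k m (tgt f)"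
    using t fM by (auto simp: GE_def Mset_def)
  show ?thesis
  proof (cases d)
    case True
    hence d': "\<not> d'" using f(2) tt ff tf par by (auto simp: meets_def ends_def split: if_splits; presburger)
    have "(i,j) = (i',j') \<or> (Suc i, j) = (i', Suc j')"
      using f(2) tt ff True d' par by (auto simp: meets_def ends_def split: if_splits; presburger)
    then show ?thesis
    proof
      assume e: "(i,j) = (i',j')"
      have r: "reach E (Pt x y (i,j)) (Pt x y (Suc i,j)) (dx i + 2 * dy j)"
        by (rule face_a1) (use e inr tt ff True d' par fKE in \<open>auto simp: inr_def\<close>)
      have w: "wt x y t = dx i" "wt x y f = dy j" using tt ff e True d' by auto
      have "dx i + 2 * dy j \<le> 3 * wt x y t" using w f(3) by (smt (verit))
      from reach_mono[OF r this] show ?thesis using tt True by simp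
    next
      assume e: "(Suc i, j) = (i', Suc j')"
      have r: "reach E (Pt x y (i,Suc j')) (Pt x y (Suc i,Suc j')) (dx i + 2 * dy j')"
        by (rule face_b1) (use e inr tt ff True d' par fKE in \<open>auto simp: inr_def\<close>)
      have w: "wt x y t = dx i" "wt x y f = dy j'" using tt ff e True d' by auto
      have "dx i + 2 * dy j' \<le> 3 * wt x y t" using w f(3) by (smt (verit))
      from reach_mono[OF r this] show ?thesis using tt True e by auto
    qed
  next
    case False
    hence d': "d'" using f(2) tt ff tf par by (auto simp: meets_def ends_def split: if_splits; presburger)
    have "(i,j) = (i',j') \<or> (i, Suc j) = (Suc i', j')"
      using f(2) tt ff False d' par by (auto simp: meets_def ends_def split: if_splits; presburger)
    then show ?thesis
    proof
      assume e: "(i,j) = (i',j')"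
      have r: "reach E (Pt x y (i,j)) (Pt x y (i,Suc j)) (dy j + 2 * dx i)"
        by (rule face_a2) (use e inr tt ff False d' par fKE in \<open>auto simp: inr_def\<close>)
      have w: "wt x y t = dy j" "wt x y f = dx i" using tt ff e False d' by auto
      have "dy j + 2 * dx i \<le> 3 * wt x y t" using w f(3) by (smt (verit))
      from reach_mono[OF r this] show ?thesis using tt False by simp
    next
      assume e: "(i, Suc j) = (Suc i', j')"
      have r: "reach E (Pt x y (Suc i',j)) (Pt x y (Suc i',Suc j)) (dy j + 2 * dx i')"
        by (rule face_b2) (use e inr tt ff False d' par fKE in \<open>auto simp: inr_def\<close>)
      have w: "wt x y t = dy j" "wt x y f = dx i'" using tt ff e False d' by auto
      have "dy j + 2 * dx i' \<le> 3 * wt x y t" using w f(3) by (smt (verit))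
      from reach_mono[OF r this] show ?thesis using tt False e by auto
    qed
  qed
qed

end


lemma card3: "card {a,b,c} \<le> 3"
  by (auto simp: card_insert_if)

lemma l1l2: "\<bar>a\<bar> + \<bar>b\<bar> \<le> sqrt 2 * sqrt (a^2 + b^2)" for a b :: real
proof -
  have e1: "2 * (a^2 + b^2) - (\<bar>a\<bar> + \<bar>b\<bar>)^2 = (\<bar>a\<bar> - \<bar>b\<bar>)^2"
    by (simp add: power2_eq_square algebra_simps)
  have e2: "0 \<le> (\<bar>a\<bar> - \<bar>b\<bar>)^2" by simp
  have "(\<bar>a\<bar> + \<bar>b\<bar>)^2 \<le> 2 * (a^2 + b^2)" using e1 e2 by linarith
  hence h: "\<bar>a\<bar> + \<bar>b\<bar> \<le> sqrt (2 * (a^2 + b^2))" by (rule real_le_rsqrt)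
  have s: "sqrt (2 * (a^2 + b^2)) = sqrt 2 * sqrt (a^2 + b^2)" by (rule real_sqrt_mult)
  show ?thesis using h s by linarith
qed

lemma edge_segment_pair: "edge_segment {a, b} = closed_segment a b"
  by (auto simp: edge_segment_def closed_segment_commute)

lemma hseg: "z \<in> closed_segment (a, c) (b, c) \<Longrightarrow> a \<le> b \<Longrightarrow> snd z = c \<and> a \<le> fst z \<and> fst z \<le> b"
  for a b c :: real and z :: "real \<times> real"
proof -
  assume z: "z \<in> closed_segment (a, c) (b, c)" and ab: "a \<le> b"
  obtain u where u: "0 \<le> u" "u \<le> 1" "z = (1-u) *\<^sub>R (a,c) + u *\<^sub>R (b,c)"
    using z by (auto simp: closed_segment_def)
  hence fz: "fst z = a + u*(b-a)" "snd z = c" by (simp_all add: algebra_simps)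
  have "0 \<le> u*(b-a)" using u ab by simp
  moreover have "u*(b-a) \<le> 1*(b-a)" using u ab by (intro mult_right_mono) auto
  ultimately show ?thesis using fz by simp
qed

lemma vseg: "z \<in> closed_segment (c, a) (c, b) \<Longrightarrow> a \<le> b \<Longrightarrow> fst z = c \<and> a \<le> snd z \<and> snd z \<le> b"
  for a b c :: real and z :: "real \<times> real"
proof -
  assume z: "z \<in> closed_segment (c, a) (c, b)" and ab: "a \<le> b"
  obtain u where u: "0 \<le> u" "u \<le> 1" "z = (1-u) *\<^sub>R (c,a) + u *\<^sub>R (c,b)"
    using z by (auto simp: closed_segment_def)
  hence fz: "snd z = a + u*(b-a)" "fst z = c" by (simp_all add: algebra_simps)
  have "0 \<le> u*(b-a)" using u ab by simp
  moreover have "u*(b-a) \<le> 1*(b-a)" using u ab by (intro mult_right_mono) auto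
  ultimately show ?thesis using fz by simp
qed

context gridK begin

abbreviation "V \<equiv> x ` {..<k} \<times> y ` {..<m}"

lemma Pt_V: "inr k m p \<Longrightarrow> Pt x y p \<in> V"
  by (cases p) (auto simp: Pt_def inr_def)

lemma V_Pt: "v \<in> V \<Longrightarrow> \<exists>i j. inr k m (i,j) \<and> v = Pt x y (i,j)"
  by (auto simp: Pt_def inr_def)

lemma geo: "geometric_graph V E"
  unfolding geometric_graph_def
proof
  fix e assume "e \<in> E"
  then obtain t where t: "t \<in> KE" "e = seg x y t" by (auto simp: E_def)
  have r: "inr k m (src t)" "inr k m (tgt t)" using KE_GE[OF t(1)] by (auto simp: GE_def)
  have "src t \<noteq> tgt t" by (cases t) auto
  hence "Pt x y (src t) \<noteq> Pt x y (tgt t)" using Pt_inj r by blast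
  thus "\<exists>u v. u \<in> V \<and> v \<in> V \<and> u \<noteq> v \<and> e = {u, v}"
    by (intro exI[of _ "Pt x y (src t)"] exI[of _ "Pt x y (tgt t)"])
      (use t(2) Pt_V[OF r(1)] Pt_V[OF r(2)] \<open>Pt x y (src t) \<noteq> Pt x y (tgt t)\<close> in \<open>simp add: seg_def\<close>)
qed

lemma degree_le:
  assumes ij: "inr k m (i,j)"
  shows "degree E (Pt x y (i,j)) \<le> 3"
proof -
  define S where "S = {t\<in>KE. (i,j) \<in> ends t}"
  have sub: "{e\<in>E. Pt x y (i,j) \<in> e} \<subseteq> seg x y ` S"
  proof
    fix e assume "e \<in> {e\<in>E. Pt x y (i,j) \<in> e}"
    then obtain t where t: "t\<in>KE" "e = seg x y t" "Pt x y (i,j) \<in> seg x y t" by (auto simp: E_def)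
    have r: "inr k m (src t)" "inr k m (tgt t)" using KE_GE[OF t(1)] by (auto simp: GE_def)
    have "(i,j) = src t \<or> (i,j) = tgt t"
      using t(3) Pt_inj[OF _ ij r(1)] Pt_inj[OF _ ij r(2)] unfolding seg_def by blast
    hence "(i,j) \<in> ends t" by (auto simp: ends_def)
    thus "e \<in> seg x y ` S" using t by (auto simp: S_def)
  qed
  have C: "S \<subseteq> {(i,j,True),(i,j,False),(i-1,j,True),(i,j-1,False)}"
  proof
    fix t assume t: "t \<in> S"
    obtain a b d where tt: "t = (a,b,d)" by (cases t)
    show "t \<in> {(i,j,True),(i,j,False),(i-1,j,True),(i,j-1,False)}"
      using t tt by (cases d) (auto simp: S_def ends_def)
  qed
  have fS: "finite S" by (rule finite_subset[OF C]) simp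
  have both: False if "t1 \<in> S" "t2 \<in> S" "t1 \<noteq> t2" "t1 \<in> Mset k m" "t2 \<in> Mset k m" for t1 t2
  proof -
    have "t1 \<in> K" "t2 \<in> K" using that by (auto simp: S_def KE_def)
    moreover have "meets t1 t2" using that by (auto simp: S_def meets_def)
    ultimately show False using K_match that(3) by blast
  qed
  have cS: "card S \<le> 3"
  proof -
    have "\<exists>a b c. S \<subseteq> {a,b,c}"
    proof (cases "odd (i+j)")
      case True
      have "(i,j,True) \<notin> S \<or> (i,j,False) \<notin> S"
      proof (rule ccontr)
        assume "\<not> ?thesis"
        hence h: "(i,j,True) \<in> S" "(i,j,False) \<in> S" by auto
        have "(i,j,True) \<in> Mset k m" "(i,j,False) \<in> Mset k m"
          using h True KE_GE by (auto simp: Mset_def S_def)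
        thus False using both h by blast
      qed
      thus ?thesis using C by blast
    next
      case False
      show ?thesis
      proof (cases "i = 0 \<or> j = 0")
        case ij0: True
        show ?thesis
        proof (cases "i = 0")
          case True
          hence "S \<subseteq> {(i,j,True),(i,j,False),(i,j-1,False)}" using C by auto
          thus ?thesis by blast
        next
          case False
          hence "j = 0" using ij0 by simp
          hence "S \<subseteq> {(i,j,True),(i,j,False),(i-1,j,True)}" using C by auto
          thus ?thesis by blast
        qed
      next
        case False2: False
        have "(i-1,j,True) \<notin> S \<or> (i,j-1,False) \<notin> S"
        proof (rule ccontr)
          assume "\<not> ?thesis"
          hence h: "(i-1,j,True) \<in> S" "(i,j-1,False) \<in> S" by auto
          have "(i-1,j,True) \<in> Mset k m" "(i,j-1,False) \<in> Mset k m"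
            using h False False2 KE_GE by (auto simp: Mset_def S_def)
          thus False using both h False2 by blast
        qed
        thus ?thesis using C by blast
      qed
    qed
    then obtain a b c where "S \<subseteq> {a,b,c}" by blast
    hence "card S \<le> card {a,b,c}" by (intro card_mono) auto
    thus ?thesis using card3[of a b c] by linarith
  qed
  have "degree E (Pt x y (i,j)) = card {e\<in>E. Pt x y (i,j) \<in> e}" by (simp add: degree_def)
  also have "\<dots> \<le> card (seg x y ` S)" by (rule card_mono) (use fS sub in auto)
  also have "\<dots> \<le> card S" by (rule card_image_le[OF fS])
  finally show ?thesis using cS by linarith
qed

lemma maxdeg: "max_degree_le V E 3"
  unfolding max_degree_le_def
proof
  fix v assume "v \<in> V"
  then obtain i j where "inr k m (i,j)" "v = Pt x y (i,j)" using V_Pt by blast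
  thus "degree E v \<le> 3" using degree_le by simp
qed

lemma seg_h: "(i,j,True) \<in> GE k m \<Longrightarrow> z \<in> edge_segment (seg x y (i,j,True)) \<Longrightarrow>
    snd z = y j \<and> x i \<le> fst z \<and> fst z \<le> x (Suc i)"
  by (rule hseg) (auto simp: seg_def Pt_def edge_segment_pair GE_h intro: x_mono_le)

lemma seg_v: "(i,j,False) \<in> GE k m \<Longrightarrow> z \<in> edge_segment (seg x y (i,j,False)) \<Longrightarrow>
    fst z = x i \<and> y j \<le> snd z \<and> snd z \<le> y (Suc j)"
  by (rule vseg) (auto simp: seg_def Pt_def edge_segment_pair GE_v intro: y_mono_le)

lemma plane_aux:
  assumes t1: "t1 \<in> KE" and t2: "t2 \<in> KE" and ne: "t1 \<noteq> t2"
    and z1: "z \<in> edge_segment (seg x y t1)" and z2: "z \<in> edge_segment (seg x y t2)"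
    and ord: "snd (snd t1) \<or> \<not> snd (snd t2)"
  shows "z \<in> seg x y t1 \<inter> seg x y t2"
proof -
  obtain i j d where tt1: "t1 = (i,j,d)" by (cases t1)
  obtain i' j' d' where tt2: "t2 = (i',j',d')" by (cases t2)
  have g1: "t1 \<in> GE k m" and g2: "t2 \<in> GE k m" using t1 t2 KE_GE by auto
  have zz: "z = (fst z, snd z)" by simp
  show ?thesis
  proof (cases d)
    case True
    have g1': "(i,j,True) \<in> GE k m" and z1': "z \<in> edge_segment (seg x y (i,j,True))"
      using g1 z1 tt1 True by simp_all
    note h1 = seg_h[OF g1' z1']
    have r1: "Suc i < k" "j < m" using g1 tt1 True by (auto simp: GE_h)
    show ?thesis
    proof (cases d')
      case True2: True
      have g2': "(i',j',True) \<in> GE k m" and z2': "z \<in> edge_segment (seg x y (i',j',True))"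
      using g2 z2 tt2 True2 by simp_all
    note h2 = seg_h[OF g2' z2']
      have r2: "Suc i' < k" "j' < m" using g2 tt2 True2 by (auto simp: GE_h)
      have jj: "j = j'" using h1 h2 y_inj r1 r2 by metis
      hence ii: "i \<noteq> i'" using ne tt1 tt2 True True2 by auto
      show ?thesis
      proof (cases "i < i'")
        case lt: True
        have "x (Suc i) \<le> x i'" using lt r2 by (intro x_mono_le) auto
        hence "fst z = x (Suc i)" "fst z = x i'" using h1 h2 by linarith+
        thus ?thesis using h1 h2 tt1 tt2 True True2 jj zz
          by (auto simp: seg_def Pt_def)
      next
        case ge: False
        hence lt: "i' < i" using ii by simp
        have "x (Suc i') \<le> x i" using lt r1 by (intro x_mono_le) auto
        hence "fst z = x (Suc i')" "fst z = x i" using h1 h2 by linarith+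
        thus ?thesis using h1 h2 tt1 tt2 True True2 jj zz
          by (auto simp: seg_def Pt_def)
      qed
    next
      case False2: False
      have g2': "(i',j',False) \<in> GE k m" and z2': "z \<in> edge_segment (seg x y (i',j',False))"
      using g2 z2 tt2 False2 by simp_all
    note h2 = seg_v[OF g2' z2']
      have r2: "i' < k" "Suc j' < m" using g2 tt2 False2 by (auto simp: GE_v)
      have a1: "i \<le> i'" using h1 h2 r1 r2 by (intro x_le_imp) auto
      have a2: "i' \<le> Suc i" using h1 h2 r1 r2 by (intro x_le_imp) auto
      have b1: "j' \<le> j" using h1 h2 r1 r2 by (intro y_le_imp) auto
      have b2: "j \<le> Suc j'" using h1 h2 r1 r2 by (intro y_le_imp) auto
      have zv: "z = (x i', y j)" using h1 h2 zz by simp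
      have "i' = i \<or> i' = Suc i" "j = j' \<or> j = Suc j'" using a1 a2 b1 b2 by auto
      thus ?thesis using zv tt1 tt2 True False2 by (auto simp: seg_def Pt_def)
    qed
  next
    case False
    hence False2: "\<not> d'" using ord tt1 tt2 by auto
    have g1': "(i,j,False) \<in> GE k m" and z1': "z \<in> edge_segment (seg x y (i,j,False))"
      using g1 z1 tt1 False by simp_all
    note h1 = seg_v[OF g1' z1']
    have r1: "i < k" "Suc j < m" using g1 tt1 False by (auto simp: GE_v)
    have g2': "(i',j',False) \<in> GE k m" and z2': "z \<in> edge_segment (seg x y (i',j',False))"
      using g2 z2 tt2 False2 by simp_all
    note h2 = seg_v[OF g2' z2']
    have r2: "i' < k" "Suc j' < m" using g2 tt2 False2 by (auto simp: GE_v)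
    have ii: "i = i'" using h1 h2 x_inj r1 r2 by metis
    hence jj: "j \<noteq> j'" using ne tt1 tt2 False False2 by auto
    show ?thesis
    proof (cases "j < j'")
      case lt: True
      have "y (Suc j) \<le> y j'" using lt r2 by (intro y_mono_le) auto
      hence "snd z = y (Suc j)" "snd z = y j'" using h1 h2 by linarith+
      thus ?thesis using h1 h2 tt1 tt2 False False2 ii zz
        by (auto simp: seg_def Pt_def)
    next
      case ge: False
      hence lt: "j' < j" using jj by simp
      have "y (Suc j') \<le> y j" using lt r1 by (intro y_mono_le) auto
      hence "snd z = y (Suc j')" "snd z = y j" using h1 h2 by linarith+
      thus ?thesis using h1 h2 tt1 tt2 False False2 ii zz
        by (auto simp: seg_def Pt_def)
    qed
  qed
qed

lemma plane_E: "plane E"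
  unfolding plane_def
proof (intro ballI impI subsetI)
  fix e1 e2 z assume e1: "e1 \<in> E" and e2: "e2 \<in> E" and ne: "e1 \<noteq> e2"
    and z: "z \<in> edge_segment e1 \<inter> edge_segment e2"
  obtain t1 where t1: "t1 \<in> KE" "e1 = seg x y t1" using e1 by (auto simp: E_def)
  obtain t2 where t2: "t2 \<in> KE" "e2 = seg x y t2" using e2 by (auto simp: E_def)
  have tne: "t1 \<noteq> t2" using ne t1 t2 by auto
  show "z \<in> e1 \<inter> e2"
  proof (cases "snd (snd t1) \<or> \<not> snd (snd t2)")
    case True
    from plane_aux[OF t1(1) t2(1) tne _ _ True] z t1 t2 show ?thesis by auto
  next
    case False
    hence o: "snd (snd t2) \<or> \<not> snd (snd t1)" by auto
    from plane_aux[OF t2(1) t1(1) tne[symmetric] _ _ o] z t1 t2 show ?thesis by auto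
  qed
qed

lemma reach_refl: "reach E u u 0" unfolding reach_def using conn.refl by blast

lemma hline: "j < m \<Longrightarrow> i + n < k \<Longrightarrow> reach E (Pt x y (i,j)) (Pt x y (i+n,j)) (3 * (x (i+n) - x i))"
proof (induction n)
  case 0 then show ?case using reach_refl by simp
next
  case (Suc n)
  have ih: "reach E (Pt x y (i,j)) (Pt x y (i+n,j)) (3 * (x (i+n) - x i))" using Suc by simp
  have "(i+n,j,True) \<in> GE k m" using Suc.prems by (simp add: GE_h)
  from edge_stretch[OF this] have "reach E (Pt x y (i+n,j)) (Pt x y (Suc (i+n),j)) (3 * (x (Suc (i+n)) - x (i+n)))"
    using Suc.prems by simp
  from reach_trans[OF ih this] have "reach E (Pt x y (i,j)) (Pt x y (Suc (i+n),j)) (3 * (x (Suc (i+n)) - x i))"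
    by (rule reach_mono) simp
  thus ?case by simp
qed

lemma vline: "i < k \<Longrightarrow> j + n < m \<Longrightarrow> reach E (Pt x y (i,j)) (Pt x y (i,j+n)) (3 * (y (j+n) - y j))"
proof (induction n)
  case 0 then show ?case using reach_refl by simp
next
  case (Suc n)
  have ih: "reach E (Pt x y (i,j)) (Pt x y (i,j+n)) (3 * (y (j+n) - y j))" using Suc by simp
  have "(i,j+n,False) \<in> GE k m" using Suc.prems by (simp add: GE_v)
  from edge_stretch[OF this] have "reach E (Pt x y (i,j+n)) (Pt x y (i,Suc (j+n))) (3 * (y (Suc (j+n)) - y (j+n)))"
    using Suc.prems by simp
  from reach_trans[OF ih this] have "reach E (Pt x y (i,j)) (Pt x y (i,Suc (j+n))) (3 * (y (Suc (j+n)) - y j))"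
    by (rule reach_mono) simp
  thus ?case by simp
qed

lemma hline2: "j < m \<Longrightarrow> i < k \<Longrightarrow> i' < k \<Longrightarrow> reach E (Pt x y (i,j)) (Pt x y (i',j)) (3 * \<bar>x i - x i'\<bar>)"
proof (cases "i \<le> i'")
  case True
  assume a: "j < m" "i < k" "i' < k"
  have "reach E (Pt x y (i,j)) (Pt x y (i+(i'-i),j)) (3 * (x (i+(i'-i)) - x i))"
    by (rule hline) (use a True in auto)
  moreover have "x i \<le> x i'" using True a by (intro x_mono_le)
  ultimately show ?thesis using True by (auto elim: reach_mono)
next
  case False
  assume a: "j < m" "i < k" "i' < k"
  have "reach E (Pt x y (i',j)) (Pt x y (i'+(i-i'),j)) (3 * (x (i'+(i-i')) - x i'))"
    by (rule hline) (use a False in auto)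
  moreover have "x i' \<le> x i" using False a by (intro x_mono_le) auto
  ultimately show ?thesis using False by (auto elim: reach_mono dest: reach_sym)
qed

lemma vline2: "i < k \<Longrightarrow> j < m \<Longrightarrow> j' < m \<Longrightarrow> reach E (Pt x y (i,j)) (Pt x y (i,j')) (3 * \<bar>y j - y j'\<bar>)"
proof (cases "j \<le> j'")
  case True
  assume a: "i < k" "j < m" "j' < m"
  have "reach E (Pt x y (i,j)) (Pt x y (i,j+(j'-j))) (3 * (y (j+(j'-j)) - y j))"
    by (rule vline) (use a True in auto)
  moreover have "y j \<le> y j'" using True a by (intro y_mono_le)
  ultimately show ?thesis using True by (auto elim: reach_mono)
next
  case False
  assume a: "i < k" "j < m" "j' < m"
  have "reach E (Pt x y (i,j')) (Pt x y (i,j'+(j-j'))) (3 * (y (j'+(j-j')) - y j'))"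
    by (rule vline) (use a False in auto)
  moreover have "y j' \<le> y j" using False a by (intro y_mono_le) auto
  ultimately show ?thesis using False by (auto elim: reach_mono dest: reach_sym)
qed

lemma stretch: "stretch_le V E (3 * sqrt 2)"
  unfolding stretch_le_def
proof (intro ballI)
  fix u v assume u: "u \<in> V" and v: "v \<in> V"
  obtain i j where ij: "inr k m (i,j)" "u = Pt x y (i,j)" using V_Pt[OF u] by blast
  obtain i' j' where ij': "inr k m (i',j')" "v = Pt x y (i',j')" using V_Pt[OF v] by blast
  have r: "reach E u v (3 * \<bar>x i - x i'\<bar> + 3 * \<bar>y j - y j'\<bar>)"
    using reach_trans[OF hline2 vline2] ij ij' by (auto simp: inr_def)
  have d: "dist u v = sqrt ((x i - x i')^2 + (y j - y j')^2)"
    using ij ij' by (simp add: Pt_def dist_Pair_Pair dist_real_def)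
  have "3 * \<bar>x i - x i'\<bar> + 3 * \<bar>y j - y j'\<bar> \<le> 3 * sqrt 2 * dist u v"
    using l1l2[of "x i - x i'" "y j - y j'"] d by simp
  from reach_gd[OF reach_mono[OF r this]] show "graph_dist E u v \<le> ereal (3 * sqrt 2 * dist u v)" .
qed

lemma main: "\<exists>E. geometric_graph V E \<and> plane E \<and> max_degree_le V E 3 \<and> stretch_le V E (3 * sqrt 2)"
  using geo plane_E maxdeg stretch by blast

end

lemma grid_exists:
  fixes x y :: "nat \<Rightarrow> real" and k m :: nat
  assumes xmono: "\<And>i j. i < j \<Longrightarrow> j < k \<Longrightarrow> x i < x j"
      and ymono: "\<And>i j. i < j \<Longrightarrow> j < m \<Longrightarrow> y i < y j"
  shows "\<exists>E. geometric_graph (x ` {..<k} \<times> y ` {..<m}) E \<and> plane E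
           \<and> max_degree_le (x ` {..<k} \<times> y ` {..<m}) E 3
           \<and> stretch_le (x ` {..<k} \<times> y ` {..<m}) E (3 * sqrt 2)"
proof -
  have fM: "finite (Mset k m)" using finite_GE[of k m] by (rule rev_finite_subset) (auto simp: Mset_def)
  obtain K where K: "K \<subseteq> Mset k m" "\<forall>e\<in>K. \<forall>f\<in>K. e \<noteq> f \<longrightarrow> \<not> meets e f"
    "\<forall>e\<in>Mset k m - K. \<exists>f\<in>K. meets e f \<and> wt x y f \<le> wt x y e"
    using greedy_matching[of "Mset k m" meets "wt x y", OF fM meets_refl meets_sym] by blast
  interpret gridK x y k m K
  proof
    show "\<And>i j. i < j \<Longrightarrow> j < k \<Longrightarrow> x i < x j" by (rule xmono)
    show "\<And>i j. i < j \<Longrightarrow> j < m \<Longrightarrow> y i < y j" by (rule ymono)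
    show "K \<subseteq> Mset k m" by (rule K(1))
    show "\<And>e f. e \<in> K \<Longrightarrow> f \<in> K \<Longrightarrow> e \<noteq> f \<Longrightarrow> \<not> meets e f" using K(2) by blast
    show "\<And>e. e \<in> Mset k m - K \<Longrightarrow> \<exists>f\<in>K. meets e f \<and> wt x y f \<le> wt x y e" using K(3) by blast
  qed
  show ?thesis by (rule main)
qed


theorem theorem7:
  fixes X Y :: "real set"
  assumes "finite X" and "finite Y" and "X \<noteq> {}" and "Y \<noteq> {}"
  shows "\<exists>E. geometric_graph (grid_vertices X Y) E \<and> plane E
           \<and> max_degree_le (grid_vertices X Y) E 3
           \<and> stretch_le (grid_vertices X Y) E (3 * sqrt 2)"
proof -
  define xs where "xs = sorted_list_of_set X"
  define ys where "ys = sorted_list_of_set Y"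
  have sx: "sorted_wrt (<) xs" unfolding xs_def by (rule strict_sorted_list_of_set)
  have sy: "sorted_wrt (<) ys" unfolding ys_def by (rule strict_sorted_list_of_set)
  have X: "nth xs ` {..<length xs} = X"
  proof -
    have "nth xs ` {..<length xs} = set xs" by (auto simp: in_set_conv_nth image_iff)
    also have "set xs = X" using assms(1) by (simp add: xs_def)
    finally show ?thesis .
  qed
  have Y: "nth ys ` {..<length ys} = Y"
  proof -
    have "nth ys ` {..<length ys} = set ys" by (auto simp: in_set_conv_nth image_iff)
    also have "set ys = Y" using assms(2) by (simp add: ys_def)
    finally show ?thesis .
  qed
  have "\<exists>E. geometric_graph (nth xs ` {..<length xs} \<times> nth ys ` {..<length ys}) E \<and> plane E
           \<and> max_degree_le (nth xs ` {..<length xs} \<times> nth ys ` {..<length ys}) E 3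
           \<and> stretch_le (nth xs ` {..<length xs} \<times> nth ys ` {..<length ys}) E (3 * sqrt 2)"
    by (rule grid_exists) (auto intro: sorted_wrt_nth_less[OF sx] sorted_wrt_nth_less[OF sy])
  then show ?thesis unfolding grid_vertices_def X Y .
qed


end
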